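(* Let $\bm\sigma=\sigma_1\bm e_1+\dots+\sigma_r\bm e_r\in\mathbb{Z}^r$ be a changemaker vector with non-trivial stable coefficients (i.e. $\sigma_r\ge2$), and let $L=\langle\bm\sigma\rangle^\perp\subseteq\mathbb{Z}^r$. If $L$ admits an obtuse superbase, then $L$ admits an obtuse superbase $B$ (possibly after permuting basis vectors $\bm e_i$ with equal coefficients $\sigma_i$) such that $-\bm e_k+\bm e_{k-1}\in B$ for every $k$ with $\sigma_k=\sigma_{k-1}$.
   Context: $\mathbb{Z}^r$ has the standard pairing. A changemaker vector is $\bm\sigma=\sum\sigma_i\bm e_i$ (in some orthonormal basis) with $\sigma_1=1$ and $\sigma_{i-1}\le\sigma_i\le1+\sigma_1+\dots+\sigma_{i-1}$; its stable coefficients are the $\sigma_i\ge2$. An obtuse superbase of a rank-$k$ lattice $L$ is a spanning set $\{v_0,\dots,v_k\}$ with $v_i\cdot v_j\le0$ for $i\ne j$ and $\sum v_i=0$. *)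

theory Defs
  imports "HOL-Combinatorics.Permutations"
begin

text \<open>Vectors of Z^r are represented as functions nat => int supported on {1..r};
 the standard basis vector e_i is the indicator of i.\<close>

definition zvec :: "nat \<Rightarrow> (nat \<Rightarrow> int) \<Rightarrow> bool" where
  "zvec r v \<longleftrightarrow> (\<forall>i. i \<notin> {1..r} \<longrightarrow> v i = 0)"

definition pair :: "nat \<Rightarrow> (nat \<Rightarrow> int) \<Rightarrow> (nat \<Rightarrow> int) \<Rightarrow> int" where
  "pair r u v = (\<Sum>i=1..r. u i * v i)"

definition basis_vec :: "nat \<Rightarrow> (nat \<Rightarrow> int)" where
  "basis_vec k = (\<lambda>j. if j = k then 1 else 0)"

definition changemaker :: "nat \<Rightarrow> (nat \<Rightarrow> int) \<Rightarrow> bool" where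
  "changemaker r \<sigma> \<longleftrightarrow> zvec r \<sigma> \<and> 1 \<le> r \<and> \<sigma> 1 = 1 \<and>
     (\<forall>i\<in>{2..r}. \<sigma> (i - 1) \<le> \<sigma> i \<and> \<sigma> i \<le> 1 + (\<Sum>j=1..i-1. \<sigma> j))"

definition perp_lattice :: "nat \<Rightarrow> (nat \<Rightarrow> int) \<Rightarrow> (nat \<Rightarrow> int) set" where
  "perp_lattice r \<sigma> = {v. zvec r v \<and> pair r \<sigma> v = 0}"

definition int_span :: "(nat \<Rightarrow> int) set \<Rightarrow> (nat \<Rightarrow> int) set" where
  "int_span V = {x. \<exists>F c. finite F \<and> F \<subseteq> V \<and> x = (\<lambda>j. \<Sum>v\<in>F. c v * v j)}"

definition int_indep :: "(nat \<Rightarrow> int) set \<Rightarrow> bool" where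
  "int_indep V \<longleftrightarrow> finite V \<and>
     (\<forall>c. (\<lambda>j. \<Sum>v\<in>V. c v * v j) = (\<lambda>j. 0) \<longrightarrow> (\<forall>v\<in>V. c v = 0))"

definition lattice_rank :: "(nat \<Rightarrow> int) set \<Rightarrow> nat \<Rightarrow> bool" where
  "lattice_rank L k \<longleftrightarrow> (\<exists>V\<subseteq>L. int_indep V \<and> card V = k) \<and>
     (\<forall>V\<subseteq>L. int_indep V \<longrightarrow> card V \<le> k)"

definition obtuse_superbase :: "nat \<Rightarrow> (nat \<Rightarrow> int) set \<Rightarrow> (nat \<Rightarrow> int) set \<Rightarrow> bool" where
  "obtuse_superbase r L B \<longleftrightarrow> finite B \<and> card B \<ge> 1 \<and> lattice_rank L (card B - 1) \<and>
     int_span B = L \<and>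
     (\<forall>u\<in>B. \<forall>v\<in>B. u \<noteq> v \<longrightarrow> pair r u v \<le> 0) \<and>
     (\<lambda>j. \<Sum>v\<in>B. v j) = (\<lambda>j. 0)"

end

theory Submission
  imports Defs Complex_Main "HOL-Library.Function_Algebras"
begin

definition qsc :: "rat \<Rightarrow> (nat \<Rightarrow> rat) \<Rightarrow> (nat \<Rightarrow> rat)" where
  "qsc a f = (\<lambda>i. a * f i)"

interpretation QV: vector_space qsc
  by unfold_locales (auto simp: qsc_def fun_eq_iff algebra_simps)

lemma sum_fun_apply': "(sum f A) x = (\<Sum>a\<in>A. f a x)"
  by (induction A rule: infinite_finite_induct) auto

definition phi :: "(nat \<Rightarrow> int) \<Rightarrow> (nat \<Rightarrow> rat)" where
  "phi v = (\<lambda>i. of_int (v i))"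

lemma inj_phi: "inj phi"
  by (auto simp: inj_def phi_def fun_eq_iff)

lemma common_denom:
  assumes "finite A"
  shows "\<exists>N::int. N > 0 \<and> (\<forall>x\<in>A. of_int N * (x::rat) \<in> \<int>)"
  using assms
proof (induction A rule: finite_induct)
  case empty then show ?case by (intro exI[of _ 1]) auto
next
  case (insert a A)
  then obtain N where N: "N > 0" "\<forall>x\<in>A. of_int N * x \<in> \<int>" by auto
  obtain p q where pq: "quotient_of a = (p, q)" by (cases "quotient_of a")
  have q: "q > 0" using quotient_of_denom_pos[OF pq] .
  have a: "a = of_int p / of_int q" using quotient_of_div[OF pq] .
  show ?case
  proof (intro exI[of _ "N*q"] conjI ballI)
    show "N*q > 0" using N q by simp
    fix x assume "x \<in> insert a A"
    then show "of_int (N*q) * x \<in> \<int>"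
    proof
      assume "x = a"
      then have "of_int (N*q) * x = of_int (N*p)" using q a by (simp add: field_simps)
      then show ?thesis by (metis Ints_of_int)
    next
      assume "x \<in> A"
      then have "of_int N * x \<in> \<int>" using N by auto
      then have "of_int q * (of_int N * x) \<in> \<int>" by simp
      then show ?thesis by (simp add: ac_simps)
    qed
  qed
qed

lemma indep_phi:
  assumes "int_indep V"
  shows "QV.independent (phi ` V)"
proof -
  have fin: "finite V" using assms by (simp add: int_indep_def)
  have key: "\<forall>c. (\<Sum>v\<in>phi ` V. qsc (c v) v) = 0 \<longrightarrow> (\<forall>w\<in>phi ` V. c w = 0)"
  proof (intro allI impI ballI)
    fix c w assume sum0: "(\<Sum>v\<in>phi ` V. qsc (c v) v) = 0" and w: "w \<in> phi ` V"
    obtain N where N: "N > 0" "\<forall>x\<in>(\<lambda>v. c (phi v)) ` V. of_int N * x \<in> \<int>"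
      using common_denom[of "(\<lambda>v. c (phi v)) ` V"] fin by auto
    define e where "e v = (SOME k::int. of_int k = of_int N * c (phi v))" for v
    have e: "of_int (e v) = of_int N * c (phi v)" if "v \<in> V" for v
    proof -
      have "of_int N * c (phi v) \<in> \<int>" using N that by auto
      then obtain k where "of_int N * c (phi v) = of_int k" by (auto elim: Ints_cases)
      then show ?thesis unfolding e_def by (metis (mono_tags, lifting) someI)
    qed
    have inj: "inj_on phi V" using inj_phi by (auto simp: inj_on_def)
    have "(\<lambda>j. \<Sum>v\<in>V. e v * v j) = (\<lambda>j. 0)"
    proof
      fix j
      have "(\<Sum>v\<in>phi ` V. qsc (c v) v) j = 0" using sum0 by simp
      then have "(\<Sum>v\<in>phi ` V. c v * v j) = 0"
        by (simp add: sum_fun_apply' qsc_def)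
      then have "(\<Sum>v\<in>V. c (phi v) * phi v j) = 0"
        by (simp add: sum.reindex[OF inj])
      then have "(\<Sum>v\<in>V. c (phi v) * of_int (v j)) = 0"
        by (simp add: phi_def)
      then have "of_int N * (\<Sum>v\<in>V. c (phi v) * of_int (v j)) = (0::rat)" by simp
      then have "(\<Sum>v\<in>V. of_int (e v) * of_int (v j)) = (0::rat)"
        by (simp add: sum_distrib_left e mult.assoc cong: sum.cong)
      then have "of_int (\<Sum>v\<in>V. e v * v j) = (0::rat)" by simp
      then show "(\<Sum>v\<in>V. e v * v j) = 0" by presburger
    qed
    then have "\<forall>v\<in>V. e v = 0" using assms by (simp add: int_indep_def)
    then obtain v where v: "v \<in> V" "w = phi v" using w by auto
    then have "of_int N * c (phi v) = 0" using e[OF v(1)] \<open>\<forall>v\<in>V. e v = 0\<close> by simp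
    then show "c w = 0" using N v by simp
  qed
  show ?thesis using key QV.dependent_finite[of "phi ` V"] fin by auto
qed


definition comb :: "(nat \<Rightarrow> int) set \<Rightarrow> ((nat \<Rightarrow> int) \<Rightarrow> int) \<Rightarrow> nat \<Rightarrow> int" where
  "comb V c = (\<lambda>j. \<Sum>v\<in>V. c v * v j)"

lemma span_fin:
  assumes "finite V"
  shows "x \<in> int_span V \<longleftrightarrow> (\<exists>c. x = comb V c)"
proof
  assume "x \<in> int_span V"
  then obtain F c where F: "finite F" "F \<subseteq> V" "x = (\<lambda>j. \<Sum>v\<in>F. c v * v j)"
    by (auto simp: int_span_def)
  have "x = comb V (\<lambda>v. if v \<in> F then c v else 0)"
  proof
    fix j
    have "(\<Sum>v\<in>V. (if v \<in> F then c v else 0) * v j) = (\<Sum>v\<in>V. if v \<in> F then c v * v j else 0)"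
      by (rule sum.cong) auto
    also have "\<dots> = (\<Sum>v\<in>V \<inter> F. c v * v j)" using assms by (simp add: sum.If_cases)
    also have "V \<inter> F = F" using F by auto
    finally show "x j = comb V (\<lambda>v. if v \<in> F then c v else 0) j"
      using F by (simp add: comb_def)
  qed
  then show "\<exists>c. x = comb V c" by blast
next
  assume "\<exists>c. x = comb V c"
  then show "x \<in> int_span V" using assms unfolding int_span_def comb_def by blast
qed

lemma span_base: "finite V \<Longrightarrow> v \<in> V \<Longrightarrow> v \<in> int_span V"
  unfolding int_span_def
  by (intro CollectI exI[of _ "{v}"] exI[of _ "\<lambda>_. 1"]) auto

lemma span_zero: "(\<lambda>j. 0) \<in> int_span V"
  unfolding int_span_def by (intro CollectI exI[of _ "{}"]) auto

lemma span_add: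
  assumes "finite V" "a \<in> int_span V" "b \<in> int_span V"
  shows "(\<lambda>j. a j + b j) \<in> int_span V"
proof -
  obtain c d where "a = comb V c" "b = comb V d" using assms span_fin by metis
  then have "(\<lambda>j. a j + b j) = comb V (\<lambda>v. c v + d v)"
    by (auto simp: comb_def fun_eq_iff algebra_simps sum.distrib)
  then show ?thesis using assms span_fin by metis
qed

lemma span_scale:
  assumes "finite V" "a \<in> int_span V"
  shows "(\<lambda>j. k * a j) \<in> int_span V"
proof -
  obtain c where "a = comb V c" using assms span_fin by metis
  then have "(\<lambda>j. k * a j) = comb V (\<lambda>v. k * c v)"
    by (auto simp: comb_def fun_eq_iff algebra_simps sum_distrib_left)
  then show ?thesis using assms span_fin by metis
qed

lemma span_neg:
  assumes "finite V" "a \<in> int_span V"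
  shows "(\<lambda>j. - a j) \<in> int_span V"
  using span_scale[OF assms, of "-1"] by simp

lemma span_diff:
  assumes "finite V" "a \<in> int_span V" "b \<in> int_span V"
  shows "(\<lambda>j. a j - b j) \<in> int_span V"
  using span_add[OF assms(1,2) span_neg[OF assms(1,3)]] by simp

lemma span_sum:
  assumes "finite V" "finite A" "\<And>a. a \<in> A \<Longrightarrow> f a \<in> int_span V"
  shows "(\<lambda>j. \<Sum>a\<in>A. f a j) \<in> int_span V"
  using assms(2,3)
proof (induction A rule: finite_induct)
  case empty then show ?case using span_zero by simp
next
  case (insert x F)
  have "(\<lambda>j. f x j + (\<Sum>a\<in>F. f a j)) \<in> int_span V"
    using insert span_add[OF assms(1)] by simp
  then show ?case using insert by simp
qed

lemma span_comb:
  assumes "finite V" "finite W" "W \<subseteq> int_span V"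
  shows "comb W c \<in> int_span V"
  unfolding comb_def
  by (rule span_sum[OF assms(1,2)]) (use assms span_scale in auto)

lemma span_mono:
  assumes "finite V" "finite W" "W \<subseteq> int_span V"
  shows "int_span W \<subseteq> int_span V"
  using span_comb[OF assms] span_fin[OF assms(2)] by auto

lemma comb_ind:
  fixes B :: "(nat \<Rightarrow> int) set"
  assumes "finite B" "A \<subseteq> B"
  shows "(\<Sum>v\<in>B. (if v \<in> A then k else 0) * v j) = k * (\<Sum>v\<in>A. v j)"
proof -
  have "(\<Sum>v\<in>B. (if v \<in> A then k else 0) * v j) = (\<Sum>v\<in>B. if v \<in> A then k * v j else 0)"
    by (rule sum.cong) auto
  also have "\<dots> = (\<Sum>v\<in>B \<inter> A. k * v j)" using assms by (simp add: sum.If_cases)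
  also have "B \<inter> A = A" using assms by auto
  finally show ?thesis by (simp add: sum_distrib_left)
qed

lemma osb_facts:
  assumes "obtuse_superbase r L B"
  shows "finite B" "card B \<ge> 1" "lattice_rank L (card B - 1)" "int_span B = L"
    "\<And>u v. u \<in> B \<Longrightarrow> v \<in> B \<Longrightarrow> u \<noteq> v \<Longrightarrow> pair r u v \<le> 0"
    "\<And>j. (\<Sum>v\<in>B. v j) = 0"
  using assms unfolding obtuse_superbase_def by (auto simp: fun_eq_iff)

lemma osb_indep:
  assumes osb: "obtuse_superbase r L B"
    and c0: "comb B c = (\<lambda>j. 0)" and u: "u \<in> B" and w: "w \<in> B"
  shows "c u = c w"
proof (rule ccontr)
  assume ne: "c u \<noteq> c w"
  note F = osb_facts[OF osb]
  have fin: "finite B" using F by simp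
  have uw: "u \<noteq> w" using ne by auto
  obtain V where V: "V \<subseteq> L" "int_indep V" "card V = card B - 1"
    using F(3) by (auto simp: lattice_rank_def)
  define c' where "c' v = c v - c w" for v
  define D where "D = c' u"
  have D0: "D \<noteq> 0" using ne by (simp add: D_def c'_def)
  define B0 where "B0 = B - {u, w}"
  have finB0: "finite B0" using fin by (simp add: B0_def)
  have Bsplit: "B = insert u (insert w B0)" using u w by (auto simp: B0_def)
  have uB0: "u \<notin> B0" "w \<notin> B0" by (auto simp: B0_def)
  have c'0: "(\<Sum>v\<in>B. c' v * v j) = 0" for j
  proof -
    have "(\<Sum>v\<in>B. c' v * v j) = (\<Sum>v\<in>B. c v * v j) - c w * (\<Sum>v\<in>B. v j)"
      by (simp add: c'_def algebra_simps sum_subtractf sum_distrib_left)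
    also have "\<dots> = 0" using c0 F(6) by (simp add: comb_def fun_eq_iff)
    finally show ?thesis .
  qed
  have Du: "(\<lambda>j. D * u j) \<in> int_span B0"
  proof -
    have "D * u j = comb B0 (\<lambda>v. - c' v) j" for j
    proof -
      have "0 = (\<Sum>v\<in>B. c' v * v j)" using c'0 by simp
      also have "\<dots> = D * u j + c' w * w j + (\<Sum>v\<in>B0. c' v * v j)"
        using uB0 uw finB0 by (simp add: Bsplit D_def)
      finally have "D * u j = - (\<Sum>v\<in>B0. c' v * v j)" by (simp add: c'_def)
      also have "\<dots> = (\<Sum>v\<in>B0. (- c' v) * v j)" by (simp add: sum_negf[symmetric])
      finally show ?thesis by (simp add: comb_def)
    qed
    then have "(\<lambda>j. D * u j) = comb B0 (\<lambda>v. - c' v)" by auto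
    then show ?thesis using span_fin[OF finB0] by auto
  qed
  have Dw: "(\<lambda>j. D * w j) \<in> int_span B0"
  proof -
    have "D * w j = - (D * u j) - (\<Sum>v\<in>B0. D * v j)" for j
    proof -
      have "0 = (\<Sum>v\<in>B. v j)" using F(6) by simp
      also have "\<dots> = u j + w j + (\<Sum>v\<in>B0. v j)"
        using uB0 uw finB0 by (simp add: Bsplit)
      finally have "w j = - u j - (\<Sum>v\<in>B0. v j)" by simp
      then have "D * w j = D * (- u j - (\<Sum>v\<in>B0. v j))" by simp
      then show ?thesis by (simp only: right_diff_distrib sum_distrib_left mult_minus_right)
    qed
    then have e: "(\<lambda>j. D * w j) = (\<lambda>j. (\<lambda>j. - (D * u j)) j - (\<lambda>j. \<Sum>v\<in>B0. (\<lambda>j. D * v j) j) j)"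
      by auto
    have "(\<lambda>j. \<Sum>v\<in>B0. (\<lambda>j. D * v j) j) \<in> int_span B0"
      by (rule span_sum[OF finB0 finB0]) (intro span_scale[OF finB0] span_base[OF finB0])
    then show ?thesis unfolding e
      by (intro span_diff[OF finB0] span_neg[OF finB0 Du])
  qed
  have DB: "(\<lambda>j. D * b j) \<in> int_span B0" if "b \<in> B" for b
    using that Du Dw span_scale[OF finB0 span_base[OF finB0]] Bsplit by auto
  have DL: "(\<lambda>j. D * l j) \<in> int_span B0" if lL: "l \<in> L" for l
  proof -
    obtain a where a: "l = comb B a" using lL F(4) span_fin[OF fin] by auto
    have "(\<lambda>j. D * l j) = (\<lambda>j. \<Sum>v\<in>B. (\<lambda>j. a v * (\<lambda>j. D * v j) j) j)"
      by (auto simp: a comb_def sum_distrib_left algebra_simps)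
    also have "\<dots> \<in> int_span B0"
      by (rule span_sum[OF finB0 fin]) (intro span_scale[OF finB0] DB)
    finally show ?thesis .
  qed
  have sub: "phi ` V \<subseteq> QV.span (phi ` B0)"
  proof
    fix y assume "y \<in> phi ` V"
    then obtain l where l: "l \<in> V" "y = phi l" by auto
    obtain e where e: "(\<lambda>j. D * l j) = comb B0 e" using DL[of l] l V(1) span_fin[OF finB0] by auto
    have "y = (\<Sum>v\<in>B0. qsc (of_int (e v) / of_int D) (phi v))"
    proof
      fix i
      have "of_int D * of_int (l i) = (of_int (comb B0 e i) :: rat)" using e by (metis of_int_mult)
      then have "of_int (l i) = (of_int (comb B0 e i) :: rat) / of_int D" using D0
        by (simp add: field_simps)
      then show "y i = (\<Sum>v\<in>B0. qsc (of_int (e v) / of_int D) (phi v)) i"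
        by (simp add: l sum_fun_apply' qsc_def phi_def comb_def sum_divide_distrib)
    qed
    also have "\<dots> \<in> QV.span (phi ` B0)"
      by (intro QV.span_sum QV.span_scale QV.span_base) auto
    finally show "y \<in> QV.span (phi ` B0)" .
  qed
  have "card (phi ` V) \<le> card (phi ` B0)"
    using QV.independent_span_bound[OF _ indep_phi[OF V(2)] sub] finB0 by auto
  also have "\<dots> \<le> card B0" using finB0 card_image_le by blast
  also have "card B0 = card B - 2" using u w uw fin by (simp add: B0_def card_Diff_subset)
  finally have "card V \<le> card B - 2"
    using card_image[of phi V] inj_phi by (simp add: inj_on_def)
  moreover have "card B \<ge> 2"
  proof -
    have "{u, w} \<subseteq> B" using u w by auto
    then have "card {u, w} \<le> card B" using fin card_mono by blast
    then show ?thesis using uw by simp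
  qed
  ultimately show False using V(3) by simp
qed


lemma pair_sym: "pair r u v = pair r v u"
  by (simp add: pair_def mult.commute)

lemma pair_comb: "pair r u (comb B c) = (\<Sum>v\<in>B. c v * pair r u v)"
proof -
  have "pair r u (comb B c) = (\<Sum>i=1..r. \<Sum>v\<in>B. u i * (c v * v i))"
    by (simp add: pair_def comb_def sum_distrib_left)
  also have "\<dots> = (\<Sum>v\<in>B. \<Sum>i=1..r. c v * (u i * v i))"
    by (subst sum.swap) (simp add: algebra_simps)
  also have "\<dots> = (\<Sum>v\<in>B. c v * pair r u v)"
    by (simp add: pair_def sum_distrib_left)
  finally show ?thesis .
qed

lemma pair_sumv: "pair r u (\<lambda>j. \<Sum>v\<in>A. v j) = (\<Sum>v\<in>A. pair r u v)"
proof -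
  have "pair r u (\<lambda>j. \<Sum>v\<in>A. v j) = (\<Sum>i=1..r. \<Sum>v\<in>A. u i * v i)"
    by (simp add: pair_def sum_distrib_left)
  also have "\<dots> = (\<Sum>v\<in>A. pair r u v)"
    by (subst sum.swap) (simp add: pair_def)
  finally show ?thesis .
qed

lemma pair_sumv1: "pair r (\<lambda>j. \<Sum>v\<in>A. v j) u = (\<Sum>v\<in>A. pair r v u)"
  using pair_sumv[of r u A] by (simp add: pair_sym)

lemma pair_add2: "pair r u (\<lambda>j. a j + b j) = pair r u a + pair r u b"
  by (simp add: pair_def algebra_simps sum.distrib)
lemma pair_add1: "pair r (\<lambda>j. a j + b j) u = pair r a u + pair r b u"
  by (simp add: pair_def algebra_simps sum.distrib)
lemma pair_diff2: "pair r u (\<lambda>j. a j - b j) = pair r u a - pair r u b"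
  by (simp add: pair_def algebra_simps sum_subtractf)
lemma pair_diff1: "pair r (\<lambda>j. a j - b j) u = pair r a u - pair r b u"
  by (simp add: pair_def algebra_simps sum_subtractf)
lemma pair_zero2: "pair r u (\<lambda>j. 0) = 0"
  by (simp add: pair_def)
lemma pair_self_nonneg: "pair r u u \<ge> 0"
  by (simp add: pair_def sum_nonneg)

lemma lemA:
  assumes fin: "finite B" and s0: "\<And>j. (\<Sum>v\<in>B. v j) = 0"
    and obt: "\<And>u v. u \<in> B \<Longrightarrow> v \<in> B \<Longrightarrow> u \<noteq> v \<Longrightarrow> pair r u v \<le> 0"
    and u: "u \<in> B" and mx: "\<And>w. w \<in> B \<Longrightarrow> c w \<le> c u"
  shows "pair r u (comb B c) \<ge> 0"
proof -
  have z: "(\<Sum>w\<in>B. pair r u w) = 0"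
    using pair_sumv[of r u B] s0 pair_zero2 by simp
  have "pair r u (comb B c) = (\<Sum>w\<in>B. c w * pair r u w) - c u * (\<Sum>w\<in>B. pair r u w)"
    using z by (simp add: pair_comb)
  also have "\<dots> = (\<Sum>w\<in>B. (c w - c u) * pair r u w)"
    by (simp add: sum_distrib_left algebra_simps sum_subtractf)
  also have "\<dots> \<ge> 0"
  proof (rule sum_nonneg)
    fix w assume w: "w \<in> B"
    show "(c w - c u) * pair r u w \<ge> 0"
    proof (cases "w = u")
      case True then show ?thesis by simp
    next
      case False
      then have "pair r u w \<le> 0" using obt u w by auto
      moreover have "c w - c u \<le> 0" using mx w by simp
      ultimately show ?thesis by (simp add: mult_nonpos_nonpos)
    qed
  qed
  finally show ?thesis .
qed

lemma sigma_pos: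
  assumes "changemaker r \<sigma>"
  shows "1 \<le> i \<Longrightarrow> i \<le> r \<Longrightarrow> \<sigma> i \<ge> 1"
proof (induction i rule: nat_induct_at_least)
  case base then show ?case using assms by (simp add: changemaker_def)
next
  case (Suc n)
  then have "Suc n \<in> {2..r}" by auto
  then have "\<sigma> (Suc n - 1) \<le> \<sigma> (Suc n)" using assms unfolding changemaker_def by blast
  then show ?case using Suc by simp
qed

lemma minnorm:
  assumes cm: "changemaker r \<sigma>" and v: "v \<in> perp_lattice r \<sigma>" and nz: "v \<noteq> (\<lambda>j. 0)"
  shows "pair r v v \<ge> 2"
proof (rule ccontr)
  assume "\<not> pair r v v \<ge> 2"
  then have le1: "pair r v v \<le> 1" by simp
  have zv: "zvec r v" and ps: "pair r \<sigma> v = 0" using v by (auto simp: perp_lattice_def)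
  obtain i where i: "v i \<noteq> 0" using nz by auto
  then have iin: "i \<in> {1..r}" using zv by (auto simp: zvec_def)
  have "pair r v v = v i * v i + (\<Sum>j\<in>{1..r} - {i}. v j * v j)"
    using iin by (simp add: pair_def sum.remove)
  moreover have "v i * v i \<ge> 1"
  proof -
    have "v i * v i > 0" using i by (cases "v i > 0") (auto simp: mult_neg_neg)
    then show ?thesis by linarith
  qed
  moreover have "(\<Sum>j\<in>{1..r} - {i}. v j * v j) \<ge> 0" by (simp add: sum_nonneg)
  ultimately have "(\<Sum>j\<in>{1..r} - {i}. v j * v j) = 0" using le1 by simp
  then have oth: "\<forall>j\<in>{1..r} - {i}. v j * v j = 0"
    by (subst (asm) sum_nonneg_eq_0_iff) auto
  have "pair r \<sigma> v = \<sigma> i * v i + (\<Sum>j\<in>{1..r} - {i}. \<sigma> j * v j)"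
    using iin by (simp add: pair_def sum.remove)
  also have "(\<Sum>j\<in>{1..r} - {i}. \<sigma> j * v j) = 0" using oth by (intro sum.neutral) auto
  finally have "\<sigma> i * v i = 0" using ps by simp
  moreover have "\<sigma> i \<ge> 1" using sigma_pos[OF cm] iin by auto
  ultimately show False using i by simp
qed

lemma perp_closed:
  assumes "a \<in> perp_lattice r \<sigma>" "b \<in> perp_lattice r \<sigma>"
  shows "(\<lambda>j. a j - b j) \<in> perp_lattice r \<sigma>"
  using assms by (auto simp: perp_lattice_def zvec_def pair_diff2)

lemma pair_sq: "pair r (\<lambda>j. a j + b j) (\<lambda>j. a j + b j) = pair r a a + 2 * pair r a b + pair r b b"
  by (simp add: pair_add1 pair_add2 pair_sym[of r b a])

lemma decomp:
  assumes osb: "obtuse_superbase r L B"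
    and mn: "\<And>v. v \<in> L \<Longrightarrow> v \<noteq> (\<lambda>j. 0) \<Longrightarrow> pair r v v \<ge> 2"
    and Lc: "\<And>a b. a \<in> L \<Longrightarrow> b \<in> L \<Longrightarrow> (\<lambda>j. a j - b j) \<in> L"
    and x: "x \<in> L" and xx: "pair r x x = 2"
  shows "\<exists>T. T \<subseteq> B \<and> T \<noteq> {} \<and> x = (\<lambda>j. \<Sum>v\<in>T. v j)"
proof -
  note F = osb_facts[OF osb]
  have fin: "finite B" using F by simp
  have ne: "B \<noteq> {}" using F(2) by auto
  obtain c where c: "x = comb B c" using x F(4) span_fin[OF fin] by auto
  define M where "M = Max (c ` B)"
  define T where "T = {v\<in>B. c v = M}"
  have cM: "c w \<le> M" if "w \<in> B" for w using that fin by (simp add: M_def)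
  have Tne: "T \<noteq> {}"
  proof -
    have "M \<in> c ` B" using fin ne by (simp add: M_def)
    then show ?thesis by (auto simp: T_def)
  qed
  have TB: "T \<subseteq> B" by (auto simp: T_def)
  define s where "s = (\<lambda>j. \<Sum>v\<in>T. v j)"
  define y where "y = (\<lambda>j. x j - s j)"
  define c2 where "c2 v = c v - (if v \<in> T then 1 else 0)" for v
  have ycomb: "y = comb B c2"
  proof
    fix j
    have "comb B c2 j = comb B c j - (\<Sum>v\<in>B. (if v \<in> T then 1 else 0) * v j)"
      by (simp add: comb_def c2_def algebra_simps sum_subtractf)
    also have "\<dots> = x j - s j" using comb_ind[OF fin TB, of 1 j] c by (simp add: s_def)
    finally show "y j = comb B c2 j" by (simp add: y_def)
  qed
  have "pair r u y \<ge> 0" if u: "u \<in> T" for u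
    unfolding ycomb
  proof (rule lemA[OF fin F(6) F(5)])
    show "u \<in> B" using u TB by auto
    fix w assume w: "w \<in> B"
    show "c2 w \<le> c2 u"
    proof (cases "w \<in> T")
      case True then show ?thesis using u by (simp add: c2_def T_def)
    next
      case False
      then have "c w < M" using cM[OF w] w by (auto simp: T_def)
      then show ?thesis using u False by (simp add: c2_def T_def)
    qed
  qed
  then have sy: "pair r s y \<ge> 0" unfolding s_def pair_sumv1 by (simp add: sum_nonneg)
  have finT: "finite T" using fin TB finite_subset by auto
  have sL: "s \<in> L" unfolding s_def F(4)[symmetric]
    by (rule span_sum[OF fin finT]) (use TB span_base[OF fin] in auto)
  have yL: "y \<in> L" unfolding y_def using Lc[OF x sL] .
  have xys: "x = (\<lambda>j. y j + s j)" by (simp add: y_def)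
  have s0: "s \<noteq> (\<lambda>j. 0)"
  proof
    assume s0: "s = (\<lambda>j. 0)"
    have "comb B (\<lambda>v. if v \<in> T then 1 else 0) = (\<lambda>j. 0)"
      using comb_ind[OF fin TB, of 1] s0 by (simp add: comb_def s_def fun_eq_iff)
    then have cst: "\<And>a b. a \<in> B \<Longrightarrow> b \<in> B \<Longrightarrow> (if a \<in> T then 1 else 0) = (if b \<in> T then 1 else (0::int))"
      using osb_indep[OF osb] by blast
    obtain t where t: "t \<in> T" using Tne by auto
    have "T = B"
    proof
      show "B \<subseteq> T"
      proof
        fix b assume b: "b \<in> B"
        have "t \<in> B" using t TB by auto
        then have "(if b \<in> T then 1 else 0) = (if t \<in> T then 1 else (0::int))" using cst b by blast
        then show "b \<in> T" using t by (auto split: if_splits)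
      qed
    qed (rule TB)
    then have "\<forall>v\<in>B. c v = M" by (auto simp: T_def)
    then have "x = (\<lambda>j. M * (\<Sum>v\<in>B. v j))" by (simp add: c comb_def sum_distrib_left)
    then have "x = (\<lambda>j. 0)" using F(6) by simp
    then show False using xx by (simp add: pair_def)
  qed
  have y0: "y = (\<lambda>j. 0)"
  proof (rule ccontr)
    assume "y \<noteq> (\<lambda>j. 0)"
    then have "pair r y y \<ge> 2" using mn yL by auto
    moreover have "pair r s s \<ge> 2" using mn sL s0 by auto
    moreover have "pair r x x = pair r y y + 2 * pair r y s + pair r s s"
      unfolding xys by (rule pair_sq)
    ultimately show False using xx sy by (simp add: pair_sym[of r y s])
  qed
  show ?thesis using y0 xys TB Tne by (intro exI[of _ T]) (auto simp: s_def)
qed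


lemma sum_ind1:
  fixes B :: "(nat \<Rightarrow> int) set"
  assumes "finite B" "p \<in> B"
  shows "(\<Sum>v\<in>B. (if v = p then 1 else 0) * v j) = p j"
proof -
  have "(\<Sum>v\<in>B. (if v = p then 1 else 0) * v j) = (\<Sum>v\<in>B. if v = p then p j else 0)"
    by (rule sum.cong) auto
  also have "\<dots> = p j" using assms by simp
  finally show ?thesis .
qed

lemma osb_replace:
  assumes osb: "obtuse_superbase r L B"
    and Dl: "Dl \<subseteq> B" and finN: "finite N" and disj: "N \<inter> (B - Dl) = {}"
    and cardN: "card N = card Dl"
    and sums: "\<And>j. (\<Sum>v\<in>N. v j) = (\<Sum>v\<in>Dl. v j)"
    and Nsp: "N \<subseteq> int_span B" and Dsp: "Dl \<subseteq> int_span ((B - Dl) \<union> N)"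
    and obt: "\<And>u v. u \<in> (B - Dl) \<union> N \<Longrightarrow> v \<in> (B - Dl) \<union> N \<Longrightarrow> u \<noteq> v \<Longrightarrow> pair r u v \<le> 0"
  shows "obtuse_superbase r L ((B - Dl) \<union> N)"
proof -
  note F = osb_facts[OF osb]
  have fin: "finite B" using F by simp
  have finD: "finite Dl" using fin Dl finite_subset by auto
  define B' where "B' = (B - Dl) \<union> N"
  have finB': "finite B'" using fin finN by (simp add: B'_def)
  have cardB': "card B' = card B"
  proof -
    have "card B' = card (B - Dl) + card N" unfolding B'_def
      using card_Un_disjoint[of "B - Dl" N] fin finN disj by auto
    also have "card (B - Dl) = card B - card Dl" using Dl fin by (simp add: card_Diff_subset finD)
    also have "card Dl \<le> card B" using Dl fin card_mono by blast
    ultimately show ?thesis using cardN by simp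
  qed
  have sp1: "int_span B' \<subseteq> L"
  proof -
    have "B' \<subseteq> int_span B" using Nsp span_base[OF fin] by (auto simp: B'_def)
    then show ?thesis using span_mono[OF fin finB'] F(4) by auto
  qed
  have sp2: "L \<subseteq> int_span B'"
  proof -
    have "B \<subseteq> int_span B'" using Dsp span_base[OF finB'] by (auto simp: B'_def)
    then show ?thesis using span_mono[OF finB' fin] F(4) by auto
  qed
  have sum0: "(\<Sum>v\<in>B'. v j) = 0" for j
  proof -
    have "(\<Sum>v\<in>B'. v j) = (\<Sum>v\<in>B - Dl. v j) + (\<Sum>v\<in>N. v j)" unfolding B'_def
      using sum.union_disjoint[of "B - Dl" N] fin finN disj by auto
    also have "\<dots> = (\<Sum>v\<in>B - Dl. v j) + (\<Sum>v\<in>Dl. v j)" using sums by simp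
    also have "\<dots> = (\<Sum>v\<in>B. v j)" using sum.subset_diff[OF Dl fin, of "\<lambda>v. v j"] by (simp add: add.commute)
    finally show ?thesis using F(6) by simp
  qed
  show ?thesis unfolding B'_def[symmetric] obtuse_superbase_def
    using finB' cardB' F(2,3) sp1 sp2 obt sum0 by (auto simp: B'_def fun_eq_iff)
qed

lemma obt_union:
  assumes "\<And>u v. u \<in> K \<Longrightarrow> v \<in> K \<Longrightarrow> u \<noteq> v \<Longrightarrow> pair r u v \<le> 0"
    and "\<And>n k. n \<in> N \<Longrightarrow> k \<in> K \<Longrightarrow> pair r n k \<le> 0"
    and "\<And>u v. u \<in> N \<Longrightarrow> v \<in> N \<Longrightarrow> u \<noteq> v \<Longrightarrow> pair r u v \<le> 0"
  shows "\<And>u v. u \<in> K \<union> N \<Longrightarrow> v \<in> K \<union> N \<Longrightarrow> u \<noteq> v \<Longrightarrow> pair r u v \<le> 0"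
  using assms pair_sym by (metis Un_iff)

locale wctx =
  fixes r L B T x
  assumes osb: "obtuse_superbase r L B"
    and TB: "T \<subseteq> B" and xT: "x = (\<lambda>j. \<Sum>v\<in>T. v j)"
begin

lemma fin: "finite B" using osb_facts[OF osb] by simp
lemma finT: "finite T" using fin TB finite_subset by auto
lemma obt: "u \<in> B \<Longrightarrow> v \<in> B \<Longrightarrow> u \<noteq> v \<Longrightarrow> pair r u v \<le> 0"
  using osb_facts(5)[OF osb] by blast

lemma wa: "pair r x u = (\<Sum>v\<in>T. pair r v u)"
  unfolding xT by (rule pair_sumv1)

lemma wb: assumes "u \<in> B" shows "pair r x u = (\<Sum>v\<in>B - T. - pair r v u)"
proof -
  have "(\<Sum>v\<in>B. pair r v u) = 0"
    using pair_sumv1[of r B u] osb_facts(6)[OF osb] by (simp add: pair_def)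
  moreover have "(\<Sum>v\<in>B. pair r v u) = (\<Sum>v\<in>T. pair r v u) + (\<Sum>v\<in>B - T. pair r v u)"
    using sum.subset_diff[OF TB fin, of "\<lambda>v. pair r v u"] by (simp add: add.commute)
  ultimately show ?thesis using wa by (simp add: sum_negf)
qed

lemma wd: assumes "u \<in> T" shows "pair r x u \<ge> 0"
  unfolding wb[OF TB[THEN subsetD, OF assms]]
  by (rule sum_nonneg) (use assms TB obt in auto)

lemma we: assumes "u \<in> B - T" shows "pair r x u \<le> 0"
  unfolding wa by (rule sum_nonpos) (use assms TB obt in auto)

lemma wf: "(\<Sum>u\<in>T. pair r x u) = pair r x x"
  using pair_sumv[of r x T] xT by simp

end


lemma comb_eval5:
  fixes B :: "(nat \<Rightarrow> int) set"
  assumes "finite B" "p1 \<in> B" "p2 \<in> B" "p3 \<in> B" "p4 \<in> B" "T \<subseteq> B"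
  shows "(\<Sum>v\<in>B. (a1 * (if v = p1 then 1 else 0) + a2 * (if v = p2 then 1 else 0)
      + a3 * (if v = p3 then 1 else 0) + a4 * (if v = p4 then 1 else 0)
      + b * (if v \<in> T then 1 else 0)) * v j)
    = a1 * p1 j + a2 * p2 j + a3 * p3 j + a4 * p4 j + b * (\<Sum>v\<in>T. v j)"
proof -
  have e: "(\<Sum>v\<in>B. (c * (if v = p then 1 else 0)) * v j) = c * p j" if "p \<in> B" for c p
  proof -
    have "(\<Sum>v\<in>B. (c * (if v = p then 1 else 0)) * v j) = c * (\<Sum>v\<in>B. (if v = p then 1 else 0) * v j)"
      by (simp add: sum_distrib_left mult.assoc)
    then show ?thesis using sum_ind1[OF assms(1) that, of j] by simp
  qed
  have eT: "(\<Sum>v\<in>B. (c * (if v \<in> T then 1 else 0)) * v j) = c * (\<Sum>v\<in>T. v j)" for c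
  proof -
    have "(\<Sum>v\<in>B. (c * (if v \<in> T then 1 else 0)) * v j) = c * (\<Sum>v\<in>B. (if v \<in> T then 1 else 0) * v j)"
      by (simp add: sum_distrib_left mult.assoc)
    then show ?thesis using comb_ind[OF assms(1,6), of 1 j] by simp
  qed
  show ?thesis
    by (simp only: distrib_right sum.distrib e eT assms)
qed

lemma indep_contra:
  assumes "obtuse_superbase r L B" "u \<in> B" "w \<in> B"
    "\<And>j. (\<Sum>v\<in>B. c v * v j) = 0" "c u \<noteq> c w"
  shows False
  using osb_indep[OF assms(1) _ assms(2,3), of c] assms(4,5) by (auto simp: comb_def)

context wctx
begin

lemma xspan: "x \<in> int_span B"
  unfolding xT by (rule span_sum[OF fin finT]) (use TB span_base[OF fin] in auto)

lemma F2:
  assumes xB: "x \<notin> B" and xx: "pair r x x = 2"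
    and q: "q \<in> T" "pair r x q = 2" and p: "p \<in> B - T" "pair r q p < 0"
  shows "obtuse_superbase r L ((B - {p, q}) \<union> {(\<lambda>j. p j + q j - x j), x})"
proof -
  note F = osb_facts[OF osb]
  have qB: "q \<in> B" using q TB by auto
  have pB: "p \<in> B" using p by auto
  have pq: "p \<noteq> q" using p q by auto
  have z1: "pair r x u = 0" if "u \<in> T - {q}" for u
  proof -
    have "(\<Sum>u\<in>T. pair r x u) = pair r x q + (\<Sum>u\<in>T - {q}. pair r x u)"
      using sum.remove[OF finT q(1)] by simp
    then have "(\<Sum>u\<in>T - {q}. pair r x u) = 0" using wf xx q by simp
    moreover have "\<forall>u\<in>T - {q}. pair r x u \<ge> 0" using wd by auto
    ultimately have "\<forall>u\<in>T - {q}. pair r x u = 0"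
      using sum_nonneg_eq_0_iff[of "T - {q}" "\<lambda>u. pair r x u"] finT by auto
    then show ?thesis using that by auto
  qed
  have z2: "pair r k u = 0" if "u \<in> T - {q}" "k \<in> B - T" for u k
  proof -
    have "(\<Sum>v\<in>B - T. - pair r v u) = 0" using z1[OF that(1)] wb[of u] that TB by auto
    moreover have "\<forall>v\<in>B - T. - pair r v u \<ge> 0" using obt that TB by force
    ultimately have "\<forall>v\<in>B - T. - pair r v u = 0"
      using sum_nonneg_eq_0_iff[of "B - T" "\<lambda>v. - pair r v u"] fin by auto
    then show ?thesis using that by auto
  qed
  have z3: "pair r x k = pair r q k" if "k \<in> B - T" for k
  proof -
    have "pair r x k = pair r q k + (\<Sum>v\<in>T - {q}. pair r v k)"
      using wa[of k] sum.remove[OF finT q(1)] by simp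
    also have "(\<Sum>v\<in>T - {q}. pair r v k) = 0"
      using z2 that by (intro sum.neutral) (auto simp: pair_sym[of r _ k])
    finally show ?thesis by simp
  qed
  define m where "m = (\<lambda>j. p j + q j - x j)"
  define K where "K = B - {p, q}"
  have pm: "pair r m k = pair r p k + pair r q k - pair r x k" for k
    unfolding m_def by (simp add: pair_add1 pair_diff1)
  have xK: "pair r x k \<le> 0" if "k \<in> K" for k
  proof (cases "k \<in> T")
    case True then show ?thesis using z1 that by (auto simp: K_def)
  next
    case False then show ?thesis using we that by (auto simp: K_def)
  qed
  have mK: "pair r m k \<le> 0" if "k \<in> K" for k
  proof (cases "k \<in> T")
    case True
    then have "pair r x k = 0" using z1 that by (auto simp: K_def)
    moreover have "pair r p k \<le> 0" using obt pB that by (auto simp: K_def)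
    moreover have "pair r q k \<le> 0" using obt qB that by (auto simp: K_def)
    ultimately show ?thesis by (simp add: pm)
  next
    case False
    then have "pair r x k = pair r q k" using z3 that by (auto simp: K_def)
    moreover have "pair r p k \<le> 0" using obt pB that by (auto simp: K_def)
    ultimately show ?thesis by (simp add: pm)
  qed
  have mx: "pair r m x \<le> 0"
  proof -
    have "pair r m x = pair r x p + pair r x q - pair r x x"
      using pm[of x] pair_sym[of r p x] pair_sym[of r q x] by simp
    then show ?thesis using we[OF p(1)] xx q(2) by simp
  qed
  have I: "\<And>c u w. u \<in> B \<Longrightarrow> w \<in> B \<Longrightarrow> (\<And>j. (\<Sum>v\<in>B. c v * v j) = 0) \<Longrightarrow> c u \<noteq> c w \<Longrightarrow> False"
    using indep_contra[OF osb] by blast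
  have mnx: "m \<noteq> x"
  proof
    assume e: "m = x"
    have "(\<Sum>v\<in>B. (1 * (if v = p then 1 else 0) + 1 * (if v = q then 1 else 0)
      + 0 * (if v = p then 1 else 0) + 0 * (if v = p then 1 else 0)
      + (-2) * (if v \<in> T then 1 else 0)) * v j) = 0" for j
    proof -
      have mj: "m j = x j" using e by simp
      have "(\<Sum>v\<in>B. (1 * (if v = p then 1 else 0) + 1 * (if v = q then 1 else 0)
      + 0 * (if v = p then 1 else 0) + 0 * (if v = p then 1 else 0)
      + (-2) * (if v \<in> T then 1 else 0)) * v j) = 1 * p j + 1 * q j + 0 * p j + 0 * p j + (-2) * (\<Sum>v\<in>T. v j)"
        by (rule comb_eval5[OF fin pB qB pB pB TB])
      also have "\<dots> = 0" using mj xT by (simp add: m_def)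
      finally show ?thesis .
    qed
    from I[OF pB qB this] show False using p q pq by auto
  qed
  have mnK: "m \<notin> K"
  proof
    assume mk: "m \<in> K"
    then have kB: "m \<in> B" "m \<noteq> p" "m \<noteq> q" by (auto simp: K_def)
    have "(\<Sum>v\<in>B. (1 * (if v = p then 1 else 0) + 1 * (if v = q then 1 else 0)
      + (-1) * (if v = m then 1 else 0) + 0 * (if v = p then 1 else 0)
      + (-1) * (if v \<in> T then 1 else 0)) * v j) = 0" for j
    proof -
      have "(\<Sum>v\<in>B. (1 * (if v = p then 1 else 0) + 1 * (if v = q then 1 else 0)
      + (-1) * (if v = m then 1 else 0) + 0 * (if v = p then 1 else 0)
      + (-1) * (if v \<in> T then 1 else 0)) * v j) = 1 * p j + 1 * q j + (-1) * m j + 0 * p j + (-1) * (\<Sum>v\<in>T. v j)"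
        by (rule comb_eval5[OF fin pB qB kB(1) pB TB])
      also have "\<dots> = 0" using xT by (simp add: m_def)
      finally show ?thesis .
    qed
    from I[OF pB qB this] show False using p q kB pq by auto
  qed
  have Dl: "{p, q} \<subseteq> B" using pB qB by auto
  show ?thesis unfolding m_def[symmetric]
  proof (rule osb_replace[OF osb Dl])
    show "finite {m, x}" by simp
    show "{m, x} \<inter> (B - {p, q}) = {}" using mnK xB by (auto simp: K_def)
    show "card {m, x} = card {p, q}" using mnx pq by simp
    show "(\<Sum>v\<in>{m, x}. v j) = (\<Sum>v\<in>{p, q}. v j)" for j using mnx pq by (simp add: m_def)
    have mspan: "m \<in> int_span B" unfolding m_def
      by (intro span_diff[OF fin] span_add[OF fin] span_base[OF fin] pB qB xspan)
    show "{m, x} \<subseteq> int_span B" using mspan xspan by auto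
    define B' where "B' = (B - {p, q}) \<union> {m, x}"
    have finB': "finite B'" using fin by (simp add: B'_def)
    have "q = (\<lambda>j. x j - (\<Sum>v\<in>T - {q}. v j))"
    proof
      fix j show "q j = x j - (\<Sum>v\<in>T - {q}. v j)"
        using sum.remove[OF finT q(1), of "\<lambda>v. v j"] xT by simp
    qed
    moreover have "(\<lambda>j. x j - (\<Sum>v\<in>T - {q}. v j)) \<in> int_span B'"
    proof (intro span_diff[OF finB'] span_sum[OF finB'])
      show "x \<in> int_span B'" by (intro span_base[OF finB']) (simp add: B'_def)
      show "finite (T - {q})" using finT by simp
      fix v assume "v \<in> T - {q}"
      then show "v \<in> int_span B'" using TB p by (intro span_base[OF finB']) (auto simp: B'_def)
    qed
    ultimately have qsp: "q \<in> int_span B'" by simp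
    have "p = (\<lambda>j. m j - q j + x j)" by (simp add: m_def fun_eq_iff)
    moreover have "(\<lambda>j. m j - q j + x j) \<in> int_span B'"
    proof -
      have "m \<in> B'" "x \<in> B'" by (auto simp: B'_def)
      then have "m \<in> int_span B'" "x \<in> int_span B'" using span_base[OF finB'] by auto
      then show ?thesis using qsp by (intro span_add[OF finB'] span_diff[OF finB'])
    qed
    ultimately have psp: "p \<in> int_span B'" by simp
    show "{p, q} \<subseteq> int_span (B - {p, q} \<union> {m, x})" using psp qsp by (simp add: B'_def)
    show "\<And>u v. u \<in> B - {p, q} \<union> {m, x} \<Longrightarrow> v \<in> B - {p, q} \<union> {m, x} \<Longrightarrow> u \<noteq> v \<Longrightarrow> pair r u v \<le> 0"
    proof (rule obt_union)
      show "\<And>u v. u \<in> B - {p, q} \<Longrightarrow> v \<in> B - {p, q} \<Longrightarrow> u \<noteq> v \<Longrightarrow> pair r u v \<le> 0"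
        using obt by auto
      show "\<And>n k. n \<in> {m, x} \<Longrightarrow> k \<in> B - {p, q} \<Longrightarrow> pair r n k \<le> 0"
        using mK xK by (auto simp: K_def)
      show "\<And>u v. u \<in> {m, x} \<Longrightarrow> v \<in> {m, x} \<Longrightarrow> u \<noteq> v \<Longrightarrow> pair r u v \<le> 0"
        using mx by (auto simp: pair_sym[of r x m])
    qed
  qed
qed

end


context wctx
begin

lemma F3:
  assumes xB: "x \<notin> B" and xx: "pair r x x = 2"
    and q: "q \<in> T" and q': "q' \<in> T" and qq: "q \<noteq> q'"
    and xq: "pair r x q = 1" and xq': "pair r x q' = 1"
    and z0: "\<And>u. u \<in> T - {q, q'} \<Longrightarrow> pair r x u = 0"
    and p': "p' \<in> B - T" and pp: "pair r p' q' = -1"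
    and zp: "\<And>k. k \<in> B - T - {p'} \<Longrightarrow> pair r k q' = 0"
  shows "obtuse_superbase r L ((B - {q, q', p'}) \<union> {(\<lambda>j. q j - x j), (\<lambda>j. p' j + q' j), x})"
proof -
  note F = osb_facts[OF osb]
  have qB: "q \<in> B" using q TB by auto
  have q'B: "q' \<in> B" using q' TB by auto
  have pB: "p' \<in> B" using p' by auto
  have pq: "p' \<noteq> q" "p' \<noteq> q'" using p' q q' by auto
  have z2: "pair r k u = 0" if "u \<in> T - {q, q'}" "k \<in> B - T" for u k
  proof -
    have "(\<Sum>v\<in>B - T. - pair r v u) = 0" using z0[OF that(1)] wb[of u] that TB by auto
    moreover have "\<forall>v\<in>B - T. - pair r v u \<ge> 0" using obt that TB by force
    ultimately have "\<forall>v\<in>B - T. - pair r v u = 0"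
      using sum_nonneg_eq_0_iff[of "B - T" "\<lambda>v. - pair r v u"] fin by auto
    then show ?thesis using that by auto
  qed
  have z3: "pair r x k = pair r q k + pair r q' k" if "k \<in> B - T" for k
  proof -
    have "pair r x k = pair r q k + (\<Sum>v\<in>T - {q}. pair r v k)"
      using wa[of k] sum.remove[OF finT q] by simp
    also have "(\<Sum>v\<in>T - {q}. pair r v k) = pair r q' k + (\<Sum>v\<in>T - {q} - {q'}. pair r v k)"
      using sum.remove[of "T - {q}" q'] finT q' qq by simp
    also have "T - {q} - {q'} = T - {q, q'}" by auto
    also have "(\<Sum>v\<in>T - {q, q'}. pair r v k) = 0"
      using z2 that by (intro sum.neutral) (auto simp: pair_sym[of r _ k])
    finally show ?thesis by simp
  qed
  define a where "a = (\<lambda>j. q j - x j)"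
  define b where "b = (\<lambda>j. p' j + q' j)"
  define K where "K = B - {q, q', p'}"
  have pa: "pair r a k = pair r q k - pair r x k" for k
    unfolding a_def by (simp add: pair_diff1)
  have pb: "pair r b k = pair r p' k + pair r q' k" for k
    unfolding b_def by (simp add: pair_add1)
  have xK: "pair r x k \<le> 0" if "k \<in> K" for k
  proof (cases "k \<in> T")
    case True then show ?thesis using z0 that by (auto simp: K_def)
  next
    case False then show ?thesis using we that by (auto simp: K_def)
  qed
  have aK: "pair r a k \<le> 0" if "k \<in> K" for k
  proof (cases "k \<in> T")
    case True
    then have "pair r x k = 0" using z0 that by (auto simp: K_def)
    moreover have "pair r q k \<le> 0" using obt qB that by (auto simp: K_def)
    ultimately show ?thesis by (simp add: pa)
  next
    case False
    then have "pair r x k = pair r q k + pair r q' k" using z3 that by (auto simp: K_def)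
    moreover have "pair r k q' = 0" using zp that False by (auto simp: K_def)
    ultimately show ?thesis by (simp add: pa pair_sym[of r q' k])
  qed
  have bK: "pair r b k \<le> 0" if "k \<in> K" for k
  proof -
    have "pair r p' k \<le> 0" "pair r q' k \<le> 0" using obt pB q'B that by (auto simp: K_def)
    then show ?thesis by (simp add: pb)
  qed
  have xp: "pair r x p' = pair r q p' - 1"
    using z3[OF p'] pp pair_sym[of r q' p'] by simp
  have ax: "pair r a x \<le> 0"
  proof -
    have "pair r a x = pair r x q - pair r x x" using pa[of x] pair_sym[of r q x] by simp
    then show ?thesis using xq xx by simp
  qed
  have bx: "pair r b x \<le> 0"
  proof -
    have "pair r b x = pair r x p' + pair r x q'" using pb[of x] pair_sym[of r p' x] pair_sym[of r q' x] by simp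
    moreover have "pair r q p' \<le> 0" using obt qB pB pq by auto
    ultimately show ?thesis using xq' xp by simp
  qed
  have ab: "pair r a b \<le> 0"
  proof -
    have "pair r a b = pair r q b - pair r x b" by (rule pa)
    also have "pair r q b = pair r q p' + pair r q q'" unfolding b_def by (simp add: pair_add2)
    also have "pair r x b = pair r x p' + pair r x q'" unfolding b_def by (simp add: pair_add2)
    finally have "pair r a b = pair r q q'" using xp xq' by simp
    then show ?thesis using obt qB q'B qq by auto
  qed
  have I: "\<And>c u w. u \<in> B \<Longrightarrow> w \<in> B \<Longrightarrow> (\<And>j. (\<Sum>v\<in>B. c v * v j) = 0) \<Longrightarrow> c u \<noteq> c w \<Longrightarrow> False"
    using indep_contra[OF osb] by blast
  have anb: "a \<noteq> b"
  proof
    assume e: "a = b"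
    have "(\<Sum>v\<in>B. (1 * (if v = q then 1 else 0) + (-1) * (if v = p' then 1 else 0)
      + (-1) * (if v = q' then 1 else 0) + 0 * (if v = q then 1 else 0)
      + (-1) * (if v \<in> T then 1 else 0)) * v j) = 0" for j
    proof -
      have "(\<Sum>v\<in>B. (1 * (if v = q then 1 else 0) + (-1) * (if v = p' then 1 else 0)
      + (-1) * (if v = q' then 1 else 0) + 0 * (if v = q then 1 else 0)
      + (-1) * (if v \<in> T then 1 else 0)) * v j) = 1 * q j + (-1) * p' j + (-1) * q' j + 0 * q j + (-1) * (\<Sum>v\<in>T. v j)"
        by (rule comb_eval5[OF fin qB pB q'B qB TB])
      also have "\<dots> = 0" using fun_cong[OF e, of j] xT by (simp add: a_def b_def)
      finally show ?thesis .
    qed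
    from I[OF qB q'B this] show False using q q' qq pq p' by auto
  qed
  have anx: "a \<noteq> x"
  proof
    assume e: "a = x"
    have "(\<Sum>v\<in>B. (1 * (if v = q then 1 else 0) + 0 * (if v = q then 1 else 0)
      + 0 * (if v = q then 1 else 0) + 0 * (if v = q then 1 else 0)
      + (-2) * (if v \<in> T then 1 else 0)) * v j) = 0" for j
    proof -
      have "(\<Sum>v\<in>B. (1 * (if v = q then 1 else 0) + 0 * (if v = q then 1 else 0)
      + 0 * (if v = q then 1 else 0) + 0 * (if v = q then 1 else 0)
      + (-2) * (if v \<in> T then 1 else 0)) * v j) = 1 * q j + 0 * q j + 0 * q j + 0 * q j + (-2) * (\<Sum>v\<in>T. v j)"
        by (rule comb_eval5[OF fin qB qB qB qB TB])
      also have "\<dots> = 0" using fun_cong[OF e, of j] xT by (simp add: a_def)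
      finally show ?thesis .
    qed
    from I[OF qB q'B this] show False using q q' qq by auto
  qed
  have bnx: "b \<noteq> x"
  proof
    assume e: "b = x"
    have "(\<Sum>v\<in>B. (1 * (if v = p' then 1 else 0) + 1 * (if v = q' then 1 else 0)
      + 0 * (if v = q then 1 else 0) + 0 * (if v = q then 1 else 0)
      + (-1) * (if v \<in> T then 1 else 0)) * v j) = 0" for j
    proof -
      have "(\<Sum>v\<in>B. (1 * (if v = p' then 1 else 0) + 1 * (if v = q' then 1 else 0)
      + 0 * (if v = q then 1 else 0) + 0 * (if v = q then 1 else 0)
      + (-1) * (if v \<in> T then 1 else 0)) * v j) = 1 * p' j + 1 * q' j + 0 * q j + 0 * q j + (-1) * (\<Sum>v\<in>T. v j)"
        by (rule comb_eval5[OF fin pB q'B qB qB TB])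
      also have "\<dots> = 0" using fun_cong[OF e, of j] xT by (simp add: b_def)
      finally show ?thesis .
    qed
    from I[OF pB qB this] show False using q q' qq pq p' by auto
  qed
  have anK: "a \<notin> K"
  proof
    assume "a \<in> K"
    then have kB: "a \<in> B" "a \<noteq> q" "a \<noteq> q'" "a \<noteq> p'" by (auto simp: K_def)
    have "(\<Sum>v\<in>B. (1 * (if v = q then 1 else 0) + (-1) * (if v = a then 1 else 0)
      + 0 * (if v = q then 1 else 0) + 0 * (if v = q then 1 else 0)
      + (-1) * (if v \<in> T then 1 else 0)) * v j) = 0" for j
    proof -
      have "(\<Sum>v\<in>B. (1 * (if v = q then 1 else 0) + (-1) * (if v = a then 1 else 0)
      + 0 * (if v = q then 1 else 0) + 0 * (if v = q then 1 else 0)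
      + (-1) * (if v \<in> T then 1 else 0)) * v j) = 1 * q j + (-1) * a j + 0 * q j + 0 * q j + (-1) * (\<Sum>v\<in>T. v j)"
        by (rule comb_eval5[OF fin qB kB(1) qB qB TB])
      also have "\<dots> = 0" using xT by (simp add: a_def)
      finally show ?thesis .
    qed
    from I[OF qB q'B this] show False using q q' qq kB by auto
  qed
  have bnK: "b \<notin> K"
  proof
    assume "b \<in> K"
    then have kB: "b \<in> B" "b \<noteq> q" "b \<noteq> q'" "b \<noteq> p'" by (auto simp: K_def)
    have "(\<Sum>v\<in>B. (1 * (if v = p' then 1 else 0) + 1 * (if v = q' then 1 else 0)
      + (-1) * (if v = b then 1 else 0) + 0 * (if v = q then 1 else 0)
      + 0 * (if v \<in> T then 1 else 0)) * v j) = 0" for j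
    proof -
      have "(\<Sum>v\<in>B. (1 * (if v = p' then 1 else 0) + 1 * (if v = q' then 1 else 0)
      + (-1) * (if v = b then 1 else 0) + 0 * (if v = q then 1 else 0)
      + 0 * (if v \<in> T then 1 else 0)) * v j) = 1 * p' j + 1 * q' j + (-1) * b j + 0 * q j + 0 * (\<Sum>v\<in>T. v j)"
        by (rule comb_eval5[OF fin pB q'B kB(1) qB TB])
      also have "\<dots> = 0" by (simp add: b_def)
      finally show ?thesis .
    qed
    from I[OF pB qB this] show False using q q' qq pq kB by auto
  qed
  have Dl: "{q, q', p'} \<subseteq> B" using pB qB q'B by auto
  show ?thesis unfolding a_def[symmetric] b_def[symmetric]
  proof (rule osb_replace[OF osb Dl])
    show "finite {a, b, x}" by simp
    show "{a, b, x} \<inter> (B - {q, q', p'}) = {}" using anK bnK xB by (auto simp: K_def)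
    show "card {a, b, x} = card {q, q', p'}" using anb anx bnx qq pq by simp
    show "(\<Sum>v\<in>{a, b, x}. v j) = (\<Sum>v\<in>{q, q', p'}. v j)" for j
      using anb anx bnx qq pq by (simp add: a_def b_def)
    have aspan: "a \<in> int_span B" unfolding a_def
      by (intro span_diff[OF fin] span_base[OF fin] qB xspan)
    have bspan: "b \<in> int_span B" unfolding b_def
      by (intro span_add[OF fin] span_base[OF fin] pB q'B)
    show "{a, b, x} \<subseteq> int_span B" using aspan bspan xspan by auto
    define B' where "B' = (B - {q, q', p'}) \<union> {a, b, x}"
    have finB': "finite B'" using fin by (simp add: B'_def)
    have inB': "a \<in> B'" "b \<in> B'" "x \<in> B'" by (auto simp: B'_def)
    then have spB': "a \<in> int_span B'" "b \<in> int_span B'" "x \<in> int_span B'" using span_base[OF finB'] by auto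
    have "q = (\<lambda>j. a j + x j)" by (simp add: a_def)
    then have qsp: "q \<in> int_span B'" using spB' span_add[OF finB'] by metis
    have "q' = (\<lambda>j. (x j - q j) - (\<Sum>v\<in>T - {q, q'}. v j))"
    proof
      fix j
      have "(\<Sum>v\<in>T. v j) = q j + (\<Sum>v\<in>T - {q}. v j)" using sum.remove[OF finT q, of "\<lambda>v. v j"] by simp
      also have "(\<Sum>v\<in>T - {q}. v j) = q' j + (\<Sum>v\<in>T - {q} - {q'}. v j)"
        using sum.remove[of "T - {q}" q' "\<lambda>v. v j"] finT q' qq by simp
      also have "T - {q} - {q'} = T - {q, q'}" by auto
      finally show "q' j = (x j - q j) - (\<Sum>v\<in>T - {q, q'}. v j)" using xT by simp
    qed
    moreover have "(\<lambda>j. (x j - q j) - (\<Sum>v\<in>T - {q, q'}. v j)) \<in> int_span B'"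
    proof (intro span_diff[OF finB'] span_sum[OF finB'])
      show "x \<in> int_span B'" "q \<in> int_span B'" using spB' qsp by auto
      show "finite (T - {q, q'})" using finT by simp
      fix v assume "v \<in> T - {q, q'}"
      then have "v \<in> B'" using TB p' by (auto simp: B'_def)
      then show "v \<in> int_span B'" using span_base[OF finB'] by auto
    qed
    ultimately have q'sp: "q' \<in> int_span B'" by simp
    have "p' = (\<lambda>j. b j - q' j)" by (simp add: b_def)
    then have psp: "p' \<in> int_span B'" using spB' q'sp span_diff[OF finB'] by metis
    show "{q, q', p'} \<subseteq> int_span (B - {q, q', p'} \<union> {a, b, x})"
      using psp qsp q'sp by (simp add: B'_def)
    show "\<And>u v. u \<in> B - {q, q', p'} \<union> {a, b, x} \<Longrightarrow> v \<in> B - {q, q', p'} \<union> {a, b, x} \<Longrightarrow> u \<noteq> v \<Longrightarrow> pair r u v \<le> 0"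
    proof (rule obt_union)
      show "\<And>u v. u \<in> B - {q, q', p'} \<Longrightarrow> v \<in> B - {q, q', p'} \<Longrightarrow> u \<noteq> v \<Longrightarrow> pair r u v \<le> 0"
        using obt by auto
      show "\<And>n k. n \<in> {a, b, x} \<Longrightarrow> k \<in> B - {q, q', p'} \<Longrightarrow> pair r n k \<le> 0"
        using aK bK xK by (auto simp: K_def)
      show "\<And>u v. u \<in> {a, b, x} \<Longrightarrow> v \<in> {a, b, x} \<Longrightarrow> u \<noteq> v \<Longrightarrow> pair r u v \<le> 0"
        using ab ax bx pair_sym[of r a b] pair_sym[of r a x] pair_sym[of r b x] by auto
    qed
  qed
qed

end


context wctx
begin

lemma le1: assumes "u \<in> T" "k \<in> B - T" shows "pair r x k \<le> pair r u k"
proof -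
  have "pair r x k = pair r u k + (\<Sum>v\<in>T - {u}. pair r v k)"
    using wa[of k] sum.remove[OF finT assms(1)] by simp
  moreover have "(\<Sum>v\<in>T - {u}. pair r v k) \<le> 0"
    by (rule sum_nonpos) (use assms TB obt in auto)
  ultimately show ?thesis by simp
qed

lemma le2: assumes "u \<in> T" "u' \<in> T" "u \<noteq> u'" "k \<in> B - T"
  shows "pair r x k \<le> pair r u k + pair r u' k"
proof -
  have "pair r x k = pair r u k + (\<Sum>v\<in>T - {u}. pair r v k)"
    using wa[of k] sum.remove[OF finT assms(1)] by simp
  also have "(\<Sum>v\<in>T - {u}. pair r v k) = pair r u' k + (\<Sum>v\<in>T - {u} - {u'}. pair r v k)"
    using sum.remove[of "T - {u}" u'] finT assms by simp
  finally have e: "pair r x k = pair r u k + pair r u' k + (\<Sum>v\<in>T - {u} - {u'}. pair r v k)" by simp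
  have "(\<Sum>v\<in>T - {u} - {u'}. pair r v k) \<le> 0"
    by (rule sum_nonpos) (use assms TB obt in auto)
  then show ?thesis using e by simp
qed

lemma nb: assumes u: "u \<in> T" and xu: "pair r x u = 1"
  shows "\<exists>p\<in>B - T. pair r p u = -1 \<and> (\<forall>k\<in>B - T - {p}. pair r k u = 0)"
proof -
  have uB: "u \<in> B" using u TB by auto
  have s1: "(\<Sum>v\<in>B - T. - pair r v u) = 1" using wb[OF uB] xu by simp
  have nn: "\<forall>v\<in>B - T. - pair r v u \<ge> 0" using obt u TB by force
  obtain p where p: "p \<in> B - T" "- pair r p u > 0"
  proof (rule ccontr)
    assume "\<not> thesis"
    then have "\<forall>v\<in>B - T. - pair r v u \<le> 0" using that by force
    then have "(\<Sum>v\<in>B - T. - pair r v u) \<le> 0" by (intro sum_nonpos) auto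
    then show False using s1 by simp
  qed
  have finBT: "finite (B - T)" using fin by simp
  have sp: "(\<Sum>v\<in>B - T. - pair r v u) = - pair r p u + (\<Sum>v\<in>B - T - {p}. - pair r v u)"
    using sum.remove[OF finBT p(1), of "\<lambda>v. - pair r v u"] by simp
  have "(\<Sum>v\<in>B - T - {p}. - pair r v u) \<ge> 0" using nn by (intro sum_nonneg) auto
  then have p1: "pair r p u = -1" and r0: "(\<Sum>v\<in>B - T - {p}. - pair r v u) = 0"
    using sp s1 p(2) by auto
  have "\<forall>k\<in>B - T - {p}. - pair r k u = 0"
    using sum_nonneg_eq_0_iff[of "B - T - {p}" "\<lambda>v. - pair r v u"] finBT r0 nn by auto
  then show ?thesis using p(1) p1 by auto
qed

end

lemma key:
  assumes osb: "obtuse_superbase r L B"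
    and mn: "\<And>v. v \<in> L \<Longrightarrow> v \<noteq> (\<lambda>j. 0) \<Longrightarrow> pair r v v \<ge> 2"
    and Lc: "\<And>a b. a \<in> L \<Longrightarrow> b \<in> L \<Longrightarrow> (\<lambda>j. a j - b j) \<in> L"
    and x: "x \<in> L" and xx: "pair r x x = 2" and xB: "x \<notin> B"
    and RB: "R \<subseteq> B" and Rb: "\<And>y. y \<in> R \<Longrightarrow> -1 \<le> pair r x y \<and> pair r x y \<le> 0"
    and Ru: "\<And>y1 y2. y1 \<in> R \<Longrightarrow> y2 \<in> R \<Longrightarrow> pair r x y1 \<noteq> 0 \<Longrightarrow> pair r x y2 \<noteq> 0 \<Longrightarrow> y1 = y2"
  shows "\<exists>B'. obtuse_superbase r L B' \<and> x \<in> B' \<and> R \<subseteq> B'"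
proof -
  obtain T where T: "T \<subseteq> B" "T \<noteq> {}" "x = (\<lambda>j. \<Sum>v\<in>T. v j)"
    using decomp[OF osb mn Lc x xx] by blast
  interpret wctx r L B T x using osb T by unfold_locales auto
  have Rpos: "y \<notin> R" if "pair r x y > 0" for y using Rb that by force
  show ?thesis
  proof (cases "\<exists>q\<in>T. pair r x q = 2")
    case True
    then obtain q where q: "q \<in> T" "pair r x q = 2" by auto
    have qB: "q \<in> B" using q TB by auto
    have s2: "(\<Sum>v\<in>B - T. - pair r v q) = 2" using wb[OF qB] q by simp
    have nn: "\<forall>v\<in>B - T. - pair r v q \<ge> 0" using obt q TB by force
    have finBT: "finite (B - T)" using fin by simp
    obtain k where k: "k \<in> B - T" "- pair r k q > 0"
    proof (rule ccontr)
      assume "\<not> thesis"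
      then have "\<forall>v\<in>B - T. - pair r v q \<le> 0" using that by force
      then have "(\<Sum>v\<in>B - T. - pair r v q) \<le> 0" by (intro sum_nonpos) auto
      then show False using s2 by simp
    qed
    obtain p where p: "p \<in> B - T" "pair r q p < 0" "p \<notin> R"
    proof (cases "k \<in> R")
      case False
      then show ?thesis using that k pair_sym[of r q k] by auto
    next
      case True
      have "pair r x k \<le> pair r q k" using le1[OF q(1) k(1)] .
      moreover have "-1 \<le> pair r x k" using Rb True by auto
      ultimately have k1: "pair r k q = -1" using k(2) pair_sym[of r q k] by simp
      have sp: "(\<Sum>v\<in>B - T. - pair r v q) = - pair r k q + (\<Sum>v\<in>B - T - {k}. - pair r v q)"
        using sum.remove[OF finBT k(1), of "\<lambda>v. - pair r v q"] by simp
      then have s1: "(\<Sum>v\<in>B - T - {k}. - pair r v q) = 1" using s2 k1 by simp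
      obtain p where p: "p \<in> B - T - {k}" "- pair r p q > 0"
      proof (rule ccontr)
        assume "\<not> thesis"
        then have "\<forall>v\<in>B - T - {k}. - pair r v q \<le> 0" using that by force
        then have "(\<Sum>v\<in>B - T - {k}. - pair r v q) \<le> 0" by (intro sum_nonpos) auto
        then show False using s1 by simp
      qed
      have pR: "p \<notin> R"
      proof
        assume pR: "p \<in> R"
        have "pair r x p \<le> pair r q p" using le1[OF q(1)] p(1) by auto
        then have "pair r x p \<noteq> 0" using p(2) pair_sym[of r q p] by simp
        moreover have "pair r x k \<noteq> 0" using le1[OF q(1) k(1)] k(2) pair_sym[of r q k] by simp
        ultimately have "p = k" using Ru pR True by blast
        then show False using p(1) by simp
      qed
      show ?thesis using that[of p] p pR pair_sym[of r q p] by auto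
    qed
    have "obtuse_superbase r L ((B - {p, q}) \<union> {(\<lambda>j. p j + q j - x j), x})"
      by (rule F2[OF xB xx q p(1,2)])
    moreover have "R \<subseteq> (B - {p, q}) \<union> {(\<lambda>j. p j + q j - x j), x}"
      using RB p(3) Rpos[of q] q(2) by auto
    ultimately show ?thesis by blast
  next
    case False
    have xsum: "(\<Sum>u\<in>T. pair r x u) = 2" using wf xx by simp
    have nnT: "\<forall>u\<in>T. pair r x u \<ge> 0" using wd by auto
    have le_single: "pair r x u \<le> (\<Sum>u\<in>T. pair r x u)" if "u \<in> T" for u
      using member_le_sum[of u T "\<lambda>u. pair r x u"] that nnT finT by auto
    obtain q where q: "q \<in> T" "pair r x q > 0"
    proof (rule ccontr)
      assume "\<not> thesis"
      then have "\<forall>u\<in>T. pair r x u \<le> 0" using that by force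
      then have "(\<Sum>u\<in>T. pair r x u) \<le> 0" by (intro sum_nonpos) auto
      then show False using xsum by simp
    qed
    have xq: "pair r x q = 1" using q le_single[OF q(1)] xsum False by force
    have s1: "(\<Sum>u\<in>T - {q}. pair r x u) = 1"
      using sum.remove[OF finT q(1), of "\<lambda>u. pair r x u"] xsum xq by simp
    obtain q' where q': "q' \<in> T - {q}" "pair r x q' > 0"
    proof (rule ccontr)
      assume "\<not> thesis"
      then have "\<forall>u\<in>T - {q}. pair r x u \<le> 0" using that by force
      then have "(\<Sum>u\<in>T - {q}. pair r x u) \<le> 0" by (intro sum_nonpos) auto
      then show False using s1 by simp
    qed
    have q'T: "q' \<in> T" and qq: "q \<noteq> q'" using q' by auto
    have s0: "(\<Sum>u\<in>T - {q} - {q'}. pair r x u) = 1 - pair r x q'"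
      using sum.remove[of "T - {q}" q' "\<lambda>u. pair r x u"] finT q' s1 by simp
    have "(\<Sum>u\<in>T - {q} - {q'}. pair r x u) \<ge> 0" using nnT by (intro sum_nonneg) auto
    then have xq': "pair r x q'= 1" and s00: "(\<Sum>u\<in>T - {q} - {q'}. pair r x u) = 0"
      using s0 q'(2) by auto
    have z0: "pair r x u = 0" if "u \<in> T - {q, q'}" for u
    proof -
      have "\<forall>u\<in>T - {q} - {q'}. pair r x u = 0"
        using sum_nonneg_eq_0_iff[of "T - {q} - {q'}" "\<lambda>u. pair r x u"] finT s00 nnT by auto
      then show ?thesis using that by auto
    qed
    obtain p' where p': "p' \<in> B - T" "pair r p' q' = -1" "\<forall>k\<in>B - T - {p'}. pair r k q' = 0"
      using nb[OF q'T xq'] by blast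
    obtain p where p: "p \<in> B - T" "pair r p q = -1" "\<forall>k\<in>B - T - {p}. pair r k q = 0"
      using nb[OF q(1) xq] by blast
    have qR: "q \<notin> R" "q' \<notin> R" using Rpos xq xq' by auto
    show ?thesis
    proof (cases "p' \<in> R")
      case False
      have "obtuse_superbase r L ((B - {q, q', p'}) \<union> {(\<lambda>j. q j - x j), (\<lambda>j. p' j + q' j), x})"
        by (rule F3[OF xB xx q(1) q'T qq xq xq' z0 p'(1,2)]) (use p'(3) in auto)
      moreover have "R \<subseteq> (B - {q, q', p'}) \<union> {(\<lambda>j. q j - x j), (\<lambda>j. p' j + q' j), x}"
        using RB qR False by auto
      ultimately show ?thesis by blast
    next
      case True
      show ?thesis
      proof (cases "p \<in> R")
        case False
        have z0': "pair r x u = 0" if "u \<in> T - {q', q}" for u using z0 that by auto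
        have "obtuse_superbase r L ((B - {q', q, p}) \<union> {(\<lambda>j. q' j - x j), (\<lambda>j. p j + q j), x})"
          by (rule F3[OF xB xx q'T q(1) qq[symmetric] xq' xq z0' p(1,2)]) (use p(3) in auto)
        moreover have "R \<subseteq> (B - {q', q, p}) \<union> {(\<lambda>j. q' j - x j), (\<lambda>j. p j + q j), x}"
          using RB qR False by auto
        ultimately show ?thesis by blast
      next
        case pR: True
        have "pair r x p' \<le> pair r q' p'" using le1[OF q'T p'(1)] .
        then have np': "pair r x p' \<noteq> 0" using p'(2) pair_sym[of r q' p'] by simp
        have "pair r x p \<le> pair r q p" using le1[OF q(1) p(1)] .
        then have np: "pair r x p \<noteq> 0" using p(2) pair_sym[of r q p] by simp
        have "p = p'" using Ru[OF pR True np np'] .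
        then have "pair r x p \<le> -2"
          using le2[OF q(1) q'T qq p(1)] p(2) p'(2) pair_sym[of r q p] pair_sym[of r q' p] by simp
        then show ?thesis using Rb[OF pR] by simp
      qed
    qed
  qed
qed


definition tie :: "nat \<Rightarrow> nat \<Rightarrow> int" where
  "tie k = (\<lambda>j. - basis_vec k j + basis_vec (k - 1) j)"

lemma pair_tie:
  assumes "2 \<le> a" "a \<le> r"
  shows "pair r (tie a) g = g (a - 1) - g a"
proof -
  have "pair r (tie a) g = (\<Sum>j=1..r. (if j = a - 1 then g j else 0) - (if j = a then g j else 0))"
    unfolding pair_def by (intro sum.cong) (auto simp: tie_def basis_vec_def)
  also have "\<dots> = (\<Sum>j=1..r. (if j = a - 1 then g j else 0)) - (\<Sum>j=1..r. (if j = a then g j else 0))"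
    by (simp add: sum_subtractf)
  also have "\<dots> = g (a - 1) - g a" using assms by auto
  finally show ?thesis .
qed

lemma tie_val: "tie k j = (if j = k - 1 then 1 else 0) - (if j = k then 1 else 0)"
  by (simp add: tie_def basis_vec_def)

theorem lemma4p7:
  fixes r :: nat and \<sigma> :: "nat \<Rightarrow> int"
  assumes "changemaker r \<sigma>"
    and "\<sigma> r \<ge> 2"
    and "\<exists>B. obtuse_superbase r (perp_lattice r \<sigma>) B"
  shows "\<exists>\<pi> B. \<pi> permutes {1..r} \<and> (\<forall>i. \<sigma> (\<pi> i) = \<sigma> i) \<and>
           obtuse_superbase r (perp_lattice r \<sigma>) B \<and>
           (\<forall>k\<in>{2..r}. \<sigma> k = \<sigma> (k - 1) \<longrightarrow>
              (\<lambda>j. - basis_vec (\<pi> k) j + basis_vec (\<pi> (k - 1)) j) \<in> B)"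
proof -
  define L where "L = perp_lattice r \<sigma>"
  have mn: "\<And>v. v \<in> L \<Longrightarrow> v \<noteq> (\<lambda>j. 0) \<Longrightarrow> pair r v v \<ge> 2"
    using minnorm[OF assms(1)] by (simp add: L_def)
  have Lc: "\<And>a b. a \<in> L \<Longrightarrow> b \<in> L \<Longrightarrow> (\<lambda>j. a j - b j) \<in> L"
    using perp_closed by (simp add: L_def)
  have P: "\<exists>B. obtuse_superbase r L B \<and> (\<forall>k\<in>{2..r}. k \<le> m \<longrightarrow> \<sigma> k = \<sigma> (k - 1) \<longrightarrow> tie k \<in> B)" for m
  proof (induction m)
    case 0 then show ?case using assms(3) by (auto simp: L_def)
  next
    case (Suc m)
    then obtain B where B: "obtuse_superbase r L B"
      "\<forall>k\<in>{2..r}. k \<le> m \<longrightarrow> \<sigma> k = \<sigma> (k - 1) \<longrightarrow> tie k \<in> B" by auto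
    show ?case
    proof (cases "Suc m \<in> {2..r} \<and> \<sigma> (Suc m) = \<sigma> m \<and> tie (Suc m) \<notin> B")
      case False
      then show ?thesis using B by (intro exI[of _ B]) (auto simp: le_Suc_eq)
    next
      case True
      define x where "x = tie (Suc m)"
      have m: "2 \<le> Suc m" "Suc m \<le> r" using True by auto
      have xv: "x j = (if j = m then 1 else 0) - (if j = Suc m then 1 else 0)" for j
        by (simp add: x_def tie_val)
      have px: "pair r x g = g m - g (Suc m)" for g
        using pair_tie[OF m] by (simp add: x_def)
      have xL: "x \<in> L"
        unfolding L_def perp_lattice_def
      proof (intro CollectI conjI)
        show "zvec r x" using m by (auto simp: zvec_def xv)
        show "pair r \<sigma> x = 0" using px[of \<sigma>] True by (simp add: pair_sym[of r \<sigma> x])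
      qed
      have xx: "pair r x x = 2" using px[of x] by (simp add: xv)
      have xB: "x \<notin> B" using True by (simp add: x_def)
      define R where "R = tie ` {k\<in>{2..r}. k \<le> m \<and> \<sigma> k = \<sigma> (k - 1)}"
      have RB: "R \<subseteq> B" using B(2) by (auto simp: R_def)
      have pxt: "pair r x (tie k) = (if k = m then -1 else 0)" if "k \<in> {2..r}" "k \<le> m" for k
        using that by (auto simp: px tie_val)
      have Rb: "-1 \<le> pair r x y \<and> pair r x y \<le> 0" if "y \<in> R" for y
        using that pxt by (auto simp: R_def)
      have Ru: "y1 = y2" if yR: "y1 \<in> R" "y2 \<in> R" and yn: "pair r x y1 \<noteq> 0" "pair r x y2 \<noteq> 0" for y1 y2
      proof -
        obtain k1 k2 where k: "k1 \<in> {2..r}" "k1 \<le> m" "y1 = tie k1" "k2 \<in> {2..r}" "k2 \<le> m" "y2 = tie k2"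
          using yR by (auto simp: R_def)
        have "k1 = m" "k2 = m" using yn pxt k by (auto split: if_splits)
        then show ?thesis using k by simp
      qed
      obtain B' where B': "obtuse_superbase r L B'" "x \<in> B'" "R \<subseteq> B'"
        using key[OF B(1) mn Lc xL xx xB RB Rb Ru] by blast
      show ?thesis
      proof (intro exI[of _ B'] conjI ballI impI)
        show "obtuse_superbase r L B'" by fact
        fix k assume k: "k \<in> {2..r}" "k \<le> Suc m" "\<sigma> k = \<sigma> (k - 1)"
        show "tie k \<in> B'"
        proof (cases "k = Suc m")
          case True then show ?thesis using B'(2) by (simp add: x_def)
        next
          case False
          then have "tie k \<in> R" using k by (auto simp: R_def)
          then show ?thesis using B'(3) by auto
        qed
      qed
    qed
  qed
  obtain B where B: "obtuse_superbase r L B" "\<forall>k\<in>{2..r}. k \<le> r \<longrightarrow> \<sigma> k = \<sigma> (k - 1) \<longrightarrow> tie k \<in> B"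
    using P[of r] by auto
  show ?thesis
  proof (intro exI[of _ id] exI[of _ B] conjI ballI impI allI)
    show "id permutes {1..r}" by (rule permutes_id)
    show "obtuse_superbase r (perp_lattice r \<sigma>) B" using B(1) by (simp add: L_def)
    fix k assume "k \<in> {2..r}" "\<sigma> k = \<sigma> (k - 1)"
    then show "(\<lambda>j. - basis_vec (id k) j + basis_vec (id (k - 1)) j) \<in> B"
      using B(2) by (simp add: tie_def)
  qed simp
qed

end
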